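(* Let $\nu_2$ be the probability measure on $[-2,2]$ with Cauchy–Stieltjes transform $T_2(z)=G(z)^{1/2}(z^2-4)^{-1/4}$ for real $z>2$ (equivalently, density proportional to $\cos[\frac12\arcsin\frac x2](4-x^2)^{-1/4}$ on $(-2,2)$). Let $K_2(w)=\dfrac{2w^2+1}{w\sqrt{1+w^2}}$. Then for all sufficiently small $w>0$, $K_2(w)>2$ and $T_2(K_2(w))=w$. Moreover, for $0<|w|<1$, $$K_2(w)=\frac1w+\sum_{k\ge0}r_{2k+1}w^{2k+1},\qquad r_{2k+1}=(-1)^k\left[\frac{(1/2)_k}{k!}+\frac12\frac{(1/2)_k}{(k+1)!}\right]=(-1)^k\frac{(1/2)_k\,(k+3/2)}{(k+1)!},$$ equivalently $(-1)^k2^{2k+1}r_{2k+1}=2\binom{2k}{k}+\frac1{k+1}\binom{2k}k$. In particular the free cumulants of $\nu_2$ are $\kappa_{2k+2}(\nu_2)=r_{2k+1}$ for $k\ge0$ (so the variance is $3/2$) and $\kappa_{2k+1}(\nu_2)=0$.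
   Context: $G(z)=\frac{z-\sqrt{z^2-4}}{2}$ is the Cauchy–Stieltjes transform of the standard Wigner law (positive for real $z>2$). $(a)_k$ is the Pochhammer symbol. The free cumulants $\kappa_j$ of a compactly supported probability measure with Cauchy–Stieltjes transform $T$ are defined by $T^{-1}(w)=\frac1w+\sum_{j\ge1}\kappa_j w^{j-1}$ for small $w$. *)

theory Defs
  imports "HOL-Analysis.Analysis" "HOL-Probability.Probability"
begin

text \<open>Cauchy--Stieltjes transform of the standard Wigner law, for real z > 2.\<close>
definition G :: "real \<Rightarrow> real" where
  "G z = (z - sqrt (z\<^sup>2 - 4)) / 2"

definition T2 :: "real \<Rightarrow> real" where
  "T2 z = sqrt (G z) * (z\<^sup>2 - 4) powr (-1/4)"

definition K2 :: "real \<Rightarrow> real" where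
  "K2 w = (2 * w\<^sup>2 + 1) / (w * sqrt (1 + w\<^sup>2))"

text \<open>Coefficient r_{2k+1}, indexed by k.\<close>
definition r :: "nat \<Rightarrow> real" where
  "r k = (-1) ^ k * (pochhammer (1/2) k / fact k + (1/2) * (pochhammer (1/2) k / fact (k + 1)))"

definition cst :: "real measure \<Rightarrow> real \<Rightarrow> real" where
  "cst \<mu> z = (\<integral>x. 1 / (z - x) \<partial>\<mu>)"

text \<open>kappa (indexed from 1; kappa 0 is fixed to 0 as a normalisation) is the sequence of
  free cumulants of mu: for small w > 0 the power series converges and
  T(1/w + sum_{j>=1} kappa_j w^(j-1)) = w, i.e. this series is the inverse of T.\<close>
definition is_free_cumulant_seq :: "real measure \<Rightarrow> (nat \<Rightarrow> real) \<Rightarrow> bool" where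
  "is_free_cumulant_seq \<mu> \<kappa> \<longleftrightarrow> \<kappa> 0 = 0 \<and>
     (\<exists>\<delta>>0. \<forall>w. 0 < w \<and> w < \<delta> \<longrightarrow>
        summable (\<lambda>j. \<kappa> (Suc j) * w ^ j) \<and>
        cst \<mu> (1 / w + (\<Sum>j. \<kappa> (Suc j) * w ^ j)) = w)"

definition free_cumulant :: "real measure \<Rightarrow> nat \<Rightarrow> real" where
  "free_cumulant \<mu> j = (THE \<kappa>. is_free_cumulant_seq \<mu> \<kappa>) j"

end

theory Submission
  imports Defs
begin


lemma K2_alt:
  fixes w :: real assumes "w > 0"
  shows "K2 w = sqrt (4 + 1 / (w\<^sup>2 * (1 + w\<^sup>2)))"
proof -
  have pos: "K2 w > 0" using assms unfolding K2_def by (simp add: add_pos_pos)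
  have "(K2 w)\<^sup>2 = (2 * w\<^sup>2 + 1)\<^sup>2 / (w\<^sup>2 * (1 + w\<^sup>2))"
    unfolding K2_def by (simp add: power_divide power_mult_distrib add_nonneg_nonneg)
  also have "\<dots> = 4 + 1 / (w\<^sup>2 * (1 + w\<^sup>2))"
  proof -
    have d: "w\<^sup>2 * (1 + w\<^sup>2) > 0" using assms by (simp add: add_pos_pos)
    have "(2 * w\<^sup>2 + 1)\<^sup>2 = 4 * (w\<^sup>2 * (1 + w\<^sup>2)) + 1" by (simp add: algebra_simps power2_eq_square)
    have "\<And>X::real. X > 0 \<Longrightarrow> (4*X+1)/X = 4 + 1/X" by (simp add: field_simps)
    thus ?thesis using d \<open>(2 * w\<^sup>2 + 1)\<^sup>2 = _\<close> by simp
  qed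
  finally show ?thesis using pos by (simp add: real_sqrt_unique)
qed

lemma K2_gt2: "w > 0 \<Longrightarrow> K2 w > (2::real)"
proof -
  assume w: "w > 0"
  have "(2::real) = sqrt 4" by simp
  also have "\<dots> < sqrt (4 + 1 / (w\<^sup>2 * (1 + w\<^sup>2)))"
    using w by (intro real_sqrt_less_mono) (simp add: add_pos_pos)
  finally show ?thesis using K2_alt[OF w] by simp
qed

lemma T2_alt:
  fixes z :: real assumes "z > 2"
  shows "T2 z = sqrt (G z / sqrt (z\<^sup>2 - 4))"
proof -
  have p: "z\<^sup>2 - 4 > 0" using assms
  proof -
    have "2*2 < z*z" using assms by (intro mult_strict_mono) auto
    thus ?thesis by (simp add: power2_eq_square)
  qed
  have "(z\<^sup>2 - 4) powr (-1/4) = inverse (((z\<^sup>2 - 4) powr (1/2)) powr (1/2))"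
    using p by (simp add: powr_powr powr_minus)
  also have "\<dots> = inverse (sqrt (sqrt (z\<^sup>2 - 4)))"
    using p by (simp only: powr_half_sqrt[OF less_imp_le[OF p]] powr_half_sqrt[OF real_sqrt_ge_zero[OF less_imp_le[OF p]]])
  finally have e: "(z\<^sup>2 - 4) powr (-1/4) = inverse (sqrt (sqrt (z\<^sup>2 - 4)))" .
  have "sqrt (G z / sqrt (z\<^sup>2 - 4)) = sqrt (G z) * inverse (sqrt (sqrt (z\<^sup>2 - 4)))"
    by (subst real_sqrt_divide) (rule divide_inverse)
  thus ?thesis unfolding T2_def e by simp
qed

lemma T2_K2: fixes w :: real assumes w: "w > 0" shows "T2 (K2 w) = w"
proof -
  define z where "z = K2 w"
  have z2: "z > 2" using K2_gt2[OF w] z_def by simp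
  have "z\<^sup>2 = 4 + 1 / (w\<^sup>2 * (1 + w\<^sup>2))" unfolding z_def K2_alt[OF w]
    using w by (simp add: add_pos_pos)
  hence "z\<^sup>2 - 4 = (1 / (w * sqrt (1 + w\<^sup>2)))\<^sup>2"
    by (simp add: power_divide power_mult_distrib add_nonneg_nonneg)
  hence s: "sqrt (z\<^sup>2 - 4) = 1 / (w * sqrt (1 + w\<^sup>2))" using w by simp
  have "G z = w / sqrt (1 + w\<^sup>2)"
  proof -
    have q: "sqrt (1 + w\<^sup>2) > 0" by (simp add: add_pos_nonneg)
    show ?thesis unfolding G_def s unfolding z_def K2_def using w q
      by (simp add: field_simps) (simp add: power2_eq_square algebra_simps)
  qed
  moreover have q2: "sqrt (1 + w\<^sup>2) > 0" by (simp add: add_pos_nonneg)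
  moreover have "\<And>a w::real. a > 0 \<Longrightarrow> w > 0 \<Longrightarrow> (w/a)/(1/(w*a)) = w\<^sup>2"
    by (simp add: field_simps power2_eq_square)
  ultimately have "G z / sqrt (z\<^sup>2 - 4) = w\<^sup>2" using w s by simp
  thus ?thesis using T2_alt[OF z2] w z_def by simp
qed

lemma K2_T2: fixes z :: real assumes z: "z > 2" shows "T2 z > 0 \<and> K2 (T2 z) = z"
proof -
  define s where "s = sqrt (z\<^sup>2 - 4)"
  have p: "z\<^sup>2 - 4 > 0" using z
  proof -
    have "2*2 < z*z" using assms by (intro mult_strict_mono) auto
    thus ?thesis by (simp add: power2_eq_square)
  qed
  have s0: "s > 0" using p s_def by simp
  have ss: "s\<^sup>2 = z\<^sup>2 - 4" using p s_def by simp
  have "s\<^sup>2 < z\<^sup>2" using ss by linarith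
  hence zs: "s < z" by (rule power2_less_imp_less) (use z in linarith)
  have G: "G z = (z - s) / 2" unfolding G_def s_def by simp
  define t where "t = T2 z"
  have t: "t = sqrt (G z / s)" using T2_alt[OF z] s_def t_def by simp
  have Gs: "G z / s > 0" using G zs s0 by simp
  have tp: "t > 0" using t Gs by simp
  have t2: "t\<^sup>2 = (z - s) / (2 * s)" using t Gs G by simp
  have "t\<^sup>2 * (1 + t\<^sup>2) = (z - s) * (z + s) / (4 * s\<^sup>2)"
    unfolding t2 using s0 by (simp add: field_simps power2_eq_square)
  also have "(z - s) * (z + s) = 4" using ss by (simp add: algebra_simps power2_eq_square)
  finally have "1 / (t\<^sup>2 * (1 + t\<^sup>2)) = s\<^sup>2" using s0 by simp
  hence "K2 t = sqrt (z\<^sup>2)" using K2_alt[OF tp] ss by simp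
  thus ?thesis using z tp t_def by simp
qed



definition a :: "nat \<Rightarrow> real" where "a k = (-1/2) gchoose k"

lemma a_poch: "a k = (-1)^k * pochhammer (1/2) k / fact k"
  unfolding a_def by (simp add: gbinomial_pochhammer)

lemma fact_Suc_real: "fact (k+1) = (real k + 1) * (fact k::real)" by simp

lemma r_alt: "r k = (-1) ^ k * pochhammer (1/2) k * (real k + 3/2) / fact (k + 1)"
proof -
  have h: "\<And>s p F (m::real). F \<noteq> 0 \<Longrightarrow> m \<noteq> 0 \<Longrightarrow>
     s * (p / F + 1/2 * (p / (m*F))) = s * p * (m + 1/2) / (m*F)" by (simp add: field_simps)
  have e: "real k + 3/2 = (real k + 1) + 1/2" by simp
  show ?thesis unfolding r_def fact_Suc_real e by (rule h) auto
qed

lemma r_a: "r k = a (Suc k) + 2 * a k"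
proof -
  have h: "\<And>s p F (m::real). F \<noteq> 0 \<Longrightarrow> m \<noteq> 0 \<Longrightarrow>
     s * p * (m + 1/2) / (m*F) = (-s) * (p * (m - 1/2)) / (m*F) + 2 * (s * p / F)"
    by (simp add: field_simps)
  have e: "real k + 3/2 = (real k + 1) + 1/2" "1/2 + real k = (real k + 1) - 1/2" by simp_all
  have fs: "fact (Suc k) = (real k + 1) * (fact k::real)" by simp
  show ?thesis unfolding r_alt a_poch pochhammer_Suc power_Suc e fs fact_Suc_real
    using h[of "fact k" "real k + 1" "(-1)^k" "pochhammer (1/2) k"] by simp
qed

lemma central: "pochhammer (1/2::real) k / fact k * 4^k = real ((2*k) choose k)"
proof (induction k)
  case 0 thus ?case by simp
next
  case (Suc k)
  have e: "real ((2 * Suc k) choose Suc k) * (real k + 1) = 2 * (2 * real k + 1) * real ((2*k) choose k)"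
  proof -
    have "Suc (Suc (2*k)) * (Suc (2*k) choose k) = (Suc (Suc (2*k)) choose Suc k) * Suc k"
      by (rule Suc_times_binomial_eq)
    moreover have "Suc (2*k) * ((2*k) choose k) = (Suc (2*k) choose Suc k) * Suc k"
      by (rule Suc_times_binomial_eq)
    moreover have "(Suc (2*k) choose Suc k) = (Suc (2*k) choose k)"
      using binomial_symmetric[of "Suc k" "Suc (2*k)"] by simp
    ultimately have "(Suc (Suc (2*k)) choose Suc k) * Suc k * Suc k = Suc (Suc (2*k)) * (Suc (2*k) * ((2*k) choose k))"
      by (metis mult.assoc)
    also have "Suc (Suc (2*k)) = 2 * Suc k" by simp
    finally have "(Suc (Suc (2*k)) choose Suc k) * Suc k * Suc k = (2 * Suc (2*k) * ((2*k) choose k)) * Suc k"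
      by (simp add: ac_simps)
    hence "(Suc (Suc (2*k)) choose Suc k) * Suc k = 2 * Suc (2*k) * ((2*k) choose k)"
      by (metis mult_right_cancel nat.simps(3))
    hence "real ((Suc (Suc (2*k)) choose Suc k) * Suc k) = real (2 * Suc (2*k) * ((2*k) choose k))"
      by (rule arg_cong)
    hence "real (Suc (Suc (2*k)) choose Suc k) * real (Suc k) = 2 * real (Suc (2*k)) * real ((2*k) choose k)"
      by (simp only: of_nat_mult of_nat_numeral)
    hence "real (Suc (Suc (2*k)) choose Suc k) * (real k + 1) = 2 * (2 * real k + 1) * real ((2*k) choose k)"
      by (simp only: of_nat_Suc of_nat_mult of_nat_numeral) (simp add: algebra_simps)
    thus ?thesis by (simp add: field_simps)
  qed
  have "pochhammer (1/2::real) (Suc k) / fact (Suc k) * 4^(Suc k)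
      = (pochhammer (1/2::real) k / fact k * 4^k) * (2 * (2 * real k + 1)) / (real k + 1)"
  proof -
    have h: "\<And>p F m Q::real. F \<noteq> 0 \<Longrightarrow> m \<noteq> 0 \<Longrightarrow>
       p*(m - 1/2)/(m*F)*(4*Q) = (p/F*Q)*(2*(2*m - 1))/m" by (simp add: field_simps)
    have fs: "fact (Suc k) = (real k + 1) * (fact k::real)" by simp
    have e2: "1/2 + real k = (real k + 1) - 1/2" "2 * real k + 1 = 2 * (real k + 1) - 1" by simp_all
    show ?thesis unfolding pochhammer_Suc fs power_Suc e2 by (rule h) auto
  qed
  also have "\<dots> = real ((2 * Suc k) choose Suc k)" unfolding Suc.IH
  proof -
    have h: "\<And>C D m::real. m \<noteq> 0 \<Longrightarrow> D * m = 2 * (2 * (m - 1) + 1) * C \<Longrightarrow>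
       C * (2 * (2 * (m - 1) + 1)) / m = D" by (simp add: field_simps)
    show "real (2 * k choose k) * (2 * (2 * real k + 1)) / (real k + 1) = real (2 * Suc k choose Suc k)"
      using h[of "real k + 1"] e by simp
  qed
  finally show ?case .
qed

lemma r_choose: "(-1) ^ k * 2 ^ (2 * k + 1) * r k
           = 2 * real ((2 * k) choose k) + real ((2 * k) choose k) / (real k + 1)"
proof -
  have "(-1) ^ k * 2 ^ (2 * k + 1) * r k = 2 * (pochhammer (1/2::real) k / fact k * 4^k) * (real k + 3/2) / (real k + 1)"
  proof -
    have p: "(2::real) ^ (2 * k + 1) = 2 * 4^k" by (simp add: power_mult)
    have m: "(-1::real)^k * (-1)^k = 1" by (simp flip: power_add)
    have h: "\<And>s p F (m::real) c. F \<noteq> 0 \<Longrightarrow> m \<noteq> 0 \<Longrightarrow> s * s = 1 \<Longrightarrow>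
      s * (2 * c) * (s * p * (m + 1/2) / (m*F)) = 2 * (p / F * c) * (m + 1/2) / m"
    proof -
      fix s p F m c :: real assume a: "F \<noteq> 0" "m \<noteq> 0" "s * s = 1"
      have "s * (2 * c) * (s * p * (m + 1/2) / (m*F)) = (s * s) * (2 * (p / F * c) * (m + 1/2) / m)"
        using a(1,2) by (simp add: field_simps)
      thus "s * (2 * c) * (s * p * (m + 1/2) / (m*F)) = 2 * (p / F * c) * (m + 1/2) / m" using a(3) by simp
    qed
    have e: "real k + 3/2 = (real k + 1) + 1/2" by simp
    show ?thesis unfolding r_alt p fact_Suc_real e by (rule h) (auto simp: m)
  qed
  also have "\<dots> = 2 * real ((2 * k) choose k) + real ((2 * k) choose k) / (real k + 1)"
    unfolding central by (simp add: field_simps)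
  finally show ?thesis .
qed



lemma K2_series:
  fixes w :: real assumes w0: "0 < \<bar>w\<bar>" and w1: "\<bar>w\<bar> < 1"
  shows "(\<lambda>k. r k * w ^ (2 * k + 1)) sums (K2 w - 1 / w)"
proof -
  define x where "x = w\<^sup>2"
  have x1: "\<bar>x\<bar> < 1" unfolding x_def using w0 w1
    by (simp add: abs_square_less_1)
  define S where "S = 1 / sqrt (1 + x)"
  have xp: "1 + x > 0" unfolding x_def by (simp add: add_pos_nonneg)
  have "(1 + x) powr (-1/2) = (1 + x) powr (- (1/2))" by simp
  also have "\<dots> = inverse ((1 + x) powr (1/2))" by (rule powr_minus)
  also have "\<dots> = inverse (sqrt (1 + x))" by (simp only: powr_half_sqrt[OF less_imp_le[OF xp]])
  also have "\<dots> = S" by (simp only: S_def inverse_eq_divide)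
  finally have "(1 + x) powr (-1/2) = S" .
  hence ser: "(\<lambda>k. a k * x^k) sums S" using gen_binomial_real[OF x1, of "-1/2"] unfolding a_def by simp
  have A: "(\<lambda>k. a (Suc k) * x^(Suc k)) sums (S - 1)"
    using ser by (subst sums_Suc_iff) (simp add: a_def)
  have A': "(\<lambda>k. a (Suc k) * x^(Suc k) / w) sums ((S - 1) / w)"
    using sums_divide[OF A] .
  have B': "(\<lambda>k. 2 * w * (a k * x^k)) sums (2 * w * S)"
    using sums_mult[OF ser] .
  have sum: "(\<lambda>k. a (Suc k) * x^(Suc k) / w + 2 * w * (a k * x^k)) sums ((S - 1) / w + 2 * w * S)"
    using sums_add[OF A' B'] .
  have wn: "w \<noteq> 0" using w0 by simp
  have terms: "a (Suc k) * x^(Suc k) / w + 2 * w * (a k * x^k) = r k * w ^ (2 * k + 1)" for k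
  proof -
    have xk: "x^k = w^(2*k)" unfolding x_def by (simp only: power_mult)
    have e1: "w ^ (2 * k + 1) = w * x^k" unfolding xk by simp
    have e2: "x^(Suc k) = w * w * x^k" unfolding power_Suc x_def power2_eq_square by simp
    have h: "\<And>A B X. A*(w*w*X)/w + 2*w*(B*X) = (A + 2*B)*(w*X)" using wn by (simp add: field_simps)
    show ?thesis unfolding r_a e1 e2 by (rule h)
  qed
  have val: "(S - 1) / w + 2 * w * S = K2 w - 1 / w"
  proof -
    have q: "sqrt (1 + x) > 0" using xp by simp
    show ?thesis unfolding K2_def S_def using q wn unfolding x_def
      by (simp add: field_simps) (simp add: power2_eq_square)
  qed
  show ?thesis using sum unfolding terms val .
qed



lemma powser_zero_unique:
  fixes c :: "nat \<Rightarrow> real"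
  assumes d: "\<delta> > 0" and z: "\<And>w. 0 < w \<Longrightarrow> w < \<delta> \<Longrightarrow> (\<lambda>j. c j * w ^ j) sums 0"
  shows "c n = 0"
proof (induction n rule: less_induct)
  case (less n)
  define e where "e j = c (j + n)" for j
  have se: "(\<lambda>j. e j * w ^ j) sums 0" if w: "0 < w" "w < \<delta>" for w
  proof -
    have s0: "(\<Sum>i<n. c i * w ^ i) = 0" using less by simp
    have "(\<lambda>j. c (j + n) * w ^ (j + n)) sums 0"
      using z[OF w] sums_iff_shift[of "\<lambda>j. c j * w ^ j" n 0] s0 by simp
    hence "(\<lambda>j. c (j + n) * w ^ (j + n) / w ^ n) sums (0 / w ^ n)"
      by (rule sums_divide)
    moreover have "c (j + n) * w ^ (j + n) / w ^ n = e j * w ^ j" for j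
      using w by (simp add: e_def power_add)
    ultimately show ?thesis by simp
  qed
  define f where "f x = (\<Sum>j. e j * x ^ j)" for x
  have sm: "summable (\<lambda>j. e j * (3/4*\<delta>) ^ j)"
    using se[of "3/4*\<delta>"] d by (simp add: sums_summable)
  have "(f \<longlongrightarrow> e 0) (at 0)"
  proof (rule powser_limit_0_strong[of "\<delta>/2"])
    show "0 < \<delta>/2" using d by simp
    fix x :: real assume "x \<noteq> 0" "norm x < \<delta>/2"
    hence "summable (\<lambda>j. e j * x ^ j)" using d by (intro powser_inside[OF sm]) auto
    thus "(\<lambda>j. e j * x ^ j) sums f x" unfolding f_def by (rule summable_sums)
  qed
  hence l1: "(f \<longlongrightarrow> e 0) (at_right 0)"
    by (rule tendsto_mono[rotated]) (simp add: at_le)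
  have "eventually (\<lambda>x. f x = 0) (at_right 0)"
    unfolding eventually_at_right_field
    using d se by (intro exI[of _ \<delta>]) (auto simp: f_def sums_iff)
  hence l2: "(f \<longlongrightarrow> 0) (at_right 0)"
    by (rule tendsto_eventually)
  have "e 0 = 0" using tendsto_unique[OF _ l1 l2] by simp
  thus ?case by (simp add: e_def)
qed



definition kap :: "nat \<Rightarrow> real" where
  "kap j = (if j = 0 then 0 else if odd j then 0 else r ((j - 2) div 2))"

lemma kap_series:
  fixes w :: real assumes "0 < w" "w < 1"
  shows "(\<lambda>j. kap (Suc j) * w ^ j) sums (K2 w - 1 / w)"
proof -
  have sm: "strict_mono (\<lambda>k::nat. 2 * k + 1)" by (rule strict_monoI) simp
  have z: "kap (Suc n) * w ^ n = 0" if "n \<notin> range (\<lambda>k::nat. 2 * k + 1)" for n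
  proof -
    have "even n" using that oddE by (metis rangeI)
    thus ?thesis by (simp add: kap_def)
  qed
  have "(\<lambda>k. kap (Suc (2 * k + 1)) * w ^ (2 * k + 1)) = (\<lambda>k. r k * w ^ (2 * k + 1))"
    by (simp add: kap_def)
  hence "(\<lambda>k. kap (Suc (2 * k + 1)) * w ^ (2 * k + 1)) sums (K2 w - 1 / w)"
    using K2_series[of w] assms by simp
  thus ?thesis using sums_mono_reindex[OF sm, of "\<lambda>j. kap (Suc j) * w ^ j"] z by blast
qed

lemma free_cumulant_eq:
  fixes \<nu>2 :: "real measure"
  assumes transform: "\<And>z. z > 2 \<Longrightarrow> cst \<nu>2 z = T2 z"
  shows "free_cumulant \<nu>2 = kap"
proof -
  have ex: "is_free_cumulant_seq \<nu>2 kap"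
    unfolding is_free_cumulant_seq_def
  proof (intro conjI exI[of _ 1] allI impI)
    show "kap 0 = 0" by (simp add: kap_def)
    show "(0::real) < 1" by simp
    fix w :: real assume w: "0 < w \<and> w < 1"
    have ks: "(\<lambda>j. kap (Suc j) * w ^ j) sums (K2 w - 1 / w)" using w by (intro kap_series) auto
    show "summable (\<lambda>j. kap (Suc j) * w ^ j)" using ks by (rule sums_summable)
    have "(\<Sum>j. kap (Suc j) * w ^ j) = K2 w - 1 / w" using ks by (rule sums_unique[symmetric])
    hence "1 / w + (\<Sum>j. kap (Suc j) * w ^ j) = K2 w" by simp
    moreover have "cst \<nu>2 (K2 w) = w" using transform[OF K2_gt2] T2_K2 w by simp
    ultimately show "cst \<nu>2 (1 / w + (\<Sum>j. kap (Suc j) * w ^ j)) = w" by simp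
  qed
  have un: "\<kappa> = kap" if h: "is_free_cumulant_seq \<nu>2 \<kappa>" for \<kappa>
  proof -
    have h': "\<kappa> 0 = 0 \<and> (\<exists>\<delta>>0. \<forall>w. 0 < w \<and> w < \<delta> \<longrightarrow>
        summable (\<lambda>j. \<kappa> (Suc j) * w ^ j) \<and>
        cst \<nu>2 (1 / w + (\<Sum>j. \<kappa> (Suc j) * w ^ j)) = w)"
      using h unfolding is_free_cumulant_seq_def .
    hence k0: "\<kappa> 0 = 0" by (rule conjunct1)
    from conjunct2[OF h'] obtain \<delta> where d: "\<delta> > 0" and hd0: "\<forall>w. 0 < w \<and> w < \<delta> \<longrightarrow>
        summable (\<lambda>j. \<kappa> (Suc j) * w ^ j) \<and>
        cst \<nu>2 (1 / w + (\<Sum>j. \<kappa> (Suc j) * w ^ j)) = w"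
      by (elim exE conjE)
    have hd: "summable (\<lambda>j. \<kappa> (Suc j) * w ^ j) \<and>
        cst \<nu>2 (1 / w + (\<Sum>j. \<kappa> (Suc j) * w ^ j)) = w" if "0 < w" "w < \<delta>" for w
      using hd0 that by simp
    define f where "f x = (\<Sum>j. \<kappa> (Suc j) * x ^ j)" for x
    have "summable (\<lambda>j. \<kappa> (Suc j) * (\<delta>/2) ^ j)" using hd[of "\<delta>/2"] d by simp
    hence "isCont f 0" unfolding f_def by (rule isCont_powser) (use d in simp)
    hence "(f \<longlongrightarrow> f 0) (at 0)" by (simp add: isCont_def)
    hence "(f \<longlongrightarrow> f 0) (at_right 0)"
      by (rule tendsto_mono[rotated]) (simp add: at_le)
    hence "LIM x at_right 0. f x + inverse x :> at_top"
      by (rule filterlim_tendsto_add_at_top) (rule filterlim_inverse_at_top_right)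
    hence ev1: "eventually (\<lambda>x. 3 \<le> f x + inverse x) (at_right (0::real))"
      unfolding filterlim_at_top by blast
    have ev2: "eventually (\<lambda>x. 0 < x \<and> x < min \<delta> 1) (at_right (0::real))"
      unfolding eventually_at_right_field using d by (intro exI[of _ "min \<delta> 1"]) auto
    have "eventually (\<lambda>x. (\<lambda>j. (\<kappa> (Suc j) - kap (Suc j)) * x ^ j) sums 0) (at_right (0::real))"
      using ev1 ev2
    proof eventually_elim
      case (elim w)
      hence w: "0 < w" "w < \<delta>" "w < 1" by auto
      have s1: "(\<lambda>j. \<kappa> (Suc j) * w ^ j) sums f w" using hd[OF w(1,2)] unfolding f_def
        by (simp add: summable_sums)
      have s2: "(\<lambda>j. kap (Suc j) * w ^ j) sums (K2 w - 1 / w)" using kap_series w by simp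
      define z where "z = 1 / w + f w"
      have z2: "z > 2" using elim z_def by (simp add: divide_inverse)
      have "T2 z = w" using hd[OF w(1,2)] transform[OF z2] unfolding z_def f_def by simp
      hence "K2 w = z" using K2_T2[OF z2] by simp
      hence "f w = K2 w - 1 / w" unfolding z_def by simp
      hence "(\<lambda>j. \<kappa> (Suc j) * w ^ j - kap (Suc j) * w ^ j) sums 0"
        using sums_diff[OF s1 s2] by simp
      thus ?case by (simp add: algebra_simps)
    qed
    then obtain b where b: "b > 0" and hb: "\<And>y. 0 < y \<Longrightarrow> y < b \<Longrightarrow>
        (\<lambda>j. (\<kappa> (Suc j) - kap (Suc j)) * y ^ j) sums 0"
      unfolding eventually_at_right_field by auto
    have "\<kappa> (Suc j) - kap (Suc j) = 0" for j
      by (rule powser_zero_unique[OF b hb])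
    thus ?thesis using k0 by (intro ext) (case_tac x, auto simp: kap_def)
  qed
  have "(THE \<kappa>. is_free_cumulant_seq \<nu>2 \<kappa>) = kap"
    using ex un by (rule the_equality)
  thus ?thesis unfolding free_cumulant_def[abs_def] by simp
qed


theorem mainTheorem8:
  fixes \<nu>2 :: "real measure"
  assumes prob: "prob_space \<nu>2"
    and borel: "sets \<nu>2 = sets borel"
    and supp: "measure \<nu>2 {-2..2} = 1"
    and transform: "\<And>z. z > 2 \<Longrightarrow> cst \<nu>2 z = T2 z"
  shows "(\<forall>\<^sub>F w in at_right 0. K2 w > 2 \<and> T2 (K2 w) = w)
    \<and> (\<forall>w::real. 0 < \<bar>w\<bar> \<and> \<bar>w\<bar> < 1 \<longrightarrow>
          (\<lambda>k. r k * w ^ (2 * k + 1)) sums (K2 w - 1 / w))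
    \<and> (\<forall>k. r k = (-1) ^ k * pochhammer (1/2) k * (real k + 3/2) / fact (k + 1))
    \<and> (\<forall>k. (-1) ^ k * 2 ^ (2 * k + 1) * r k
           = 2 * real ((2 * k) choose k) + real ((2 * k) choose k) / (real k + 1))
    \<and> (\<forall>k. free_cumulant \<nu>2 (2 * k + 2) = r k)
    \<and> free_cumulant \<nu>2 2 = 3 / 2
    \<and> (\<forall>k. free_cumulant \<nu>2 (2 * k + 1) = 0)"
proof (intro conjI allI impI)
  show "\<forall>\<^sub>F w in at_right 0. K2 w > 2 \<and> T2 (K2 w) = w"
    unfolding eventually_at_right_field
    by (intro exI[of _ 1]) (auto simp: K2_gt2 T2_K2)
  show "(\<lambda>k. r k * w ^ (2 * k + 1)) sums (K2 w - 1 / w)"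
    if "0 < \<bar>w\<bar> \<and> \<bar>w\<bar> < 1" for w :: real using K2_series that by blast
  show "r k = (-1) ^ k * pochhammer (1/2) k * (real k + 3/2) / fact (k + 1)" for k
    by (rule r_alt)
  show "(-1) ^ k * 2 ^ (2 * k + 1) * r k
           = 2 * real ((2 * k) choose k) + real ((2 * k) choose k) / (real k + 1)" for k
    by (rule r_choose)
  have fc: "free_cumulant \<nu>2 = kap" using free_cumulant_eq transform by blast
  show "free_cumulant \<nu>2 (2 * k + 2) = r k" for k unfolding fc kap_def by simp
  show "free_cumulant \<nu>2 2 = 3 / 2" unfolding fc kap_def r_def by simp
  show "free_cumulant \<nu>2 (2 * k + 1) = 0" for k unfolding fc kap_def by simp
qed

end
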